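(* Let $(q_i)_i$ be probabilities with $\sum_iq_i=1$ and $\mu_i>0$, and let $$f(\alpha)=\inf_{\{\alpha_i\}:\ \alpha_i\in[0,1],\ \sum_iq_i\alpha_i=\alpha}\ \sum_iq_iG_{\mu_i}(\alpha_i).$$ For $\alpha\in(0,1)$, let $\Lambda(\alpha)\in\mathbb{R}$ be defined implicitly by $$1-\alpha=\sum_iq_i\,\Phi\!\left(\frac{\Lambda(\alpha)}{\mu_i}+\frac{\mu_i}{2}\right).$$ Then $$f(\alpha)=\sum_iq_i\,\Phi\!\left(\frac{\Lambda(\alpha)}{\mu_i}-\frac{\mu_i}{2}\right).$$
   Context: $\Phi$ is the standard normal CDF and $G_\mu(\alpha)=\Phi(\Phi^{-1}(1-\alpha)-\mu)$ for $\alpha\in[0,1]$ (the Gaussian trade-off function). *)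

theory Defs
  imports "HOL-Probability.Probability"
begin

definition Phi :: "real \<Rightarrow> real" where
  "Phi x = measure (density lborel std_normal_density) {..x}"

text \<open>Quantile function of the standard normal, meaningful on (0,1).\<close>
definition Phi_inv :: "real \<Rightarrow> real" where
  "Phi_inv y = (THE x. Phi x = y)"

text \<open>Gaussian trade-off function G_mu(alpha) = Phi(Phi_inv(1-alpha) - mu) on [0,1],
  with the endpoint values obtained from Phi_inv(1) = +inf, Phi_inv(0) = -inf.\<close>
definition G :: "real \<Rightarrow> real \<Rightarrow> real" where
  "G mu alpha = (if alpha \<le> 0 then 1 else if alpha \<ge> 1 then 0
                 else Phi (Phi_inv (1 - alpha) - mu))"

end

theory Submission imports Defs begin

abbreviation "phi \<equiv> std_normal_density"
abbreviation "NM \<equiv> density lborel std_normal_density"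

lemma NM_prob: "prob_space NM"
  by (rule prob_space_normal_density) simp

lemma measure_NM: assumes "A \<in> sets borel" shows "measure NM A = (LBINT y:A. phi y)"
proof -
  have "measure NM A = integral\<^sup>L NM (indicator A)" using assms by simp
  also have "\<dots> = integral\<^sup>L lborel (\<lambda>y. phi y *\<^sub>R indicator A y)"
    by (rule integral_density) (use assms in auto)
  also have "\<dots> = (LBINT y:A. phi y)"
    by (simp add: set_lebesgue_integral_def mult.commute)
  finally show ?thesis .
qed

lemma Phi_diff: assumes "a \<le> b" shows "Phi b - Phi a = (LBINT y=a..b. phi y)"
proof -
  interpret prob_space NM by (rule NM_prob)
  have "{..b} = {..a} \<union> {a<..b}" using assms by auto
  have "measure NM {..b} = measure NM {..a} + measure NM {a<..b}"
  proof -
    have "{..a} \<inter> {a<..b} = {}" by auto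
    then show ?thesis using finite_measure_Union[of "{..a}" "{a<..b}"] \<open>{..b} = _\<close> by simp
  qed
  then show ?thesis unfolding Phi_def using assms
    by (simp add: interval_integral_Ioc measure_NM)
qed

lemma Phi_deriv: "(Phi has_real_derivative phi x) (at x)"
proof -
  let ?F = "\<lambda>u. LBINT y=(x-1)..u. phi y"
  have cont: "continuous_on {x-1..x+1} phi"
    unfolding std_normal_density_def by (intro continuous_intros) auto
  have "(?F has_vector_derivative phi x) (at x within {x-1..x+1})"
    by (rule interval_integral_FTC2[OF _ _ cont]) auto
  then have "(?F has_vector_derivative phi x) (at x within {x-1<..<x+1})"
    by (rule has_vector_derivative_within_subset) auto
  then have "(?F has_vector_derivative phi x) (at x)"
    by (subst (asm) has_vector_derivative_within_open) auto
  then have d: "((\<lambda>u. Phi (x-1) + ?F u) has_real_derivative phi x) (at x)"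
    by (auto simp: has_real_derivative_iff_has_vector_derivative intro!: derivative_eq_intros)
  show ?thesis
  proof (rule has_field_derivative_transform_within_open[OF d, of "{x-1<..<x+1}"])
    fix u assume "u \<in> {x-1<..<x+1}"
    then show "Phi (x-1) + ?F u = Phi u" using Phi_diff[of "x-1" u] by simp
  qed auto
qed

lemma Phi_isCont: "isCont Phi x"
  using Phi_deriv DERIV_isCont by blast

lemma Phi_cont_on: "continuous_on S Phi"
  by (simp add: Phi_isCont continuous_at_imp_continuous_on)

lemma Phi_less: assumes "x < y" shows "Phi x < Phi y"
proof (rule DERIV_pos_imp_increasing[OF assms])
  fix z :: real
  have "0 < phi z" by (rule normal_density_pos) simp
  then show "\<exists>y. (Phi has_real_derivative y) (at z) \<and> 0 < y" using Phi_deriv by blast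
qed

lemma Phi_cdf: "Phi = cdf NM"
  by (simp add: fun_eq_iff Phi_def cdf_def)

lemma NM_real_distribution: "real_distribution NM"
  unfolding real_distribution_def real_distribution_axioms_def using NM_prob by simp

lemma Phi_top: "(Phi \<longlongrightarrow> 1) at_top"
  unfolding Phi_cdf using real_distribution.cdf_lim_at_top_prob[OF NM_real_distribution] .

lemma Phi_bot: "(Phi \<longlongrightarrow> 0) at_bot"
proof -
  interpret real_distribution NM by (rule NM_real_distribution)
  show ?thesis unfolding Phi_cdf by (rule cdf_lim_at_bot)
qed

lemma Phi_le1: "Phi x \<le> 1"
  unfolding Phi_cdf using real_distribution.cdf_bounded_prob[OF NM_real_distribution] .

lemma Phi_ge0: "Phi x \<ge> 0"
proof -
  interpret real_distribution NM by (rule NM_real_distribution)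
  show ?thesis unfolding Phi_cdf by (rule cdf_nonneg)
qed

lemma Phi_lt1: "Phi x < 1"
  using Phi_less[of x "x+1"] Phi_le1[of "x+1"] by simp

lemma Phi_gt0: "Phi x > 0"
  using Phi_less[of "x-1" x] Phi_ge0[of "x-1"] by simp

lemma Phi_inj: "Phi x = Phi y \<Longrightarrow> x = y"
  using Phi_less[of x y] Phi_less[of y x] by (cases x y rule: linorder_cases) auto

lemma Phi_inv_Phi: "Phi_inv (Phi x) = x"
  unfolding Phi_inv_def by (rule the_equality) (auto dest: Phi_inj)

lemma Phi_surj: assumes "0 < y" "y < 1" shows "\<exists>x. Phi x = y"
proof -
  have "eventually (\<lambda>x. Phi x > y) at_top"
    using order_tendstoD(1)[OF Phi_top assms(2)] .
  then obtain b where b: "\<And>x. x \<ge> b \<Longrightarrow> Phi x > y" by (auto simp: eventually_at_top_linorder)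
  have "eventually (\<lambda>x. Phi x < y) at_bot"
    using order_tendstoD(2)[OF Phi_bot assms(1)] .
  then obtain a where a: "\<And>x. x \<le> a \<Longrightarrow> Phi x < y" by (auto simp: eventually_at_bot_linorder)
  have "Phi (min a b) \<le> y" "y \<le> Phi b" using a[of "min a b"] b[of b] by auto
  from IVT'[OF this _ Phi_cont_on] show ?thesis by auto
qed

lemma G_eq: assumes "0 < a" "a < 1" "Phi t = 1 - a" shows "G mu a = Phi (t - mu)"
  unfolding G_def using assms Phi_inv_Phi[of t] by auto

lemma phi_shift: "phi (t - m) = phi t * exp (m * t - m^2/2)"
proof -
  have "-((t - m)^2)/2 = -(t^2)/2 + (m * t - m^2/2)" by (simp add: power2_eq_square field_simps)
  then have "exp (-((t - m)^2)/2) = exp (-(t^2)/2) * exp (m * t - m^2/2)" by (simp add: exp_add[symmetric])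
  then show ?thesis unfolding std_normal_density_def by simp
qed

lemma key:
  assumes m: "m > 0" and t0: "t0 = L / m + m / 2"
  shows "Phi (t - m) - exp L * Phi t \<ge> Phi (t0 - m) - exp L * Phi t0"
proof -
  define h where "h = (\<lambda>t. Phi (t - m) - exp L * Phi t)"
  have hd: "(h has_real_derivative phi t * (exp (m * t - m^2/2) - exp L)) (at t)" for t
  proof -
    have d1: "((\<lambda>z. Phi (z - m)) has_real_derivative phi (t - m) * 1) (at t)"
      by (rule DERIV_chain2[OF Phi_deriv]) (auto intro!: derivative_eq_intros)
    have "(h has_real_derivative phi (t - m) * 1 - exp L * phi t) (at t)"
      unfolding h_def by (intro DERIV_diff d1 DERIV_cmult Phi_deriv)
    then show ?thesis by (simp add: phi_shift algebra_simps)
  qed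
  have cont: "continuous_on S h" for S
    unfolding h_def by (intro continuous_intros continuous_on_compose2[OF Phi_cont_on]) auto
  have eq: "m * t - m^2/2 \<ge> L \<longleftrightarrow> t \<ge> t0" for t
  proof -
    have "m * t0 - m^2/2 = L" using m by (simp add: t0 field_simps power2_eq_square)
    then have "m * t - m^2/2 - L = m * (t - t0)" by (simp add: algebra_simps)
    then have "m * t - m^2/2 \<ge> L \<longleftrightarrow> m * (t - t0) \<ge> 0" by linarith
    also have "\<dots> \<longleftrightarrow> t \<ge> t0" using m by (simp add: zero_le_mult_iff)
    finally show ?thesis .
  qed
  show ?thesis
  proof (cases "t \<ge> t0")
    case True
    have "h t0 \<le> h t"
    proof (rule DERIV_nonneg_imp_increasing_open[OF True _ cont])
      fix x assume "t0 < x" "x < t"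
      then have "exp (m * x - m^2/2) \<ge> exp L" using eq[of x] by simp
      then show "\<exists>y. (h has_real_derivative y) (at x) \<and> 0 \<le> y"
        using hd normal_density_nonneg by (intro exI conjI) (auto intro!: mult_nonneg_nonneg)
    qed
    then show ?thesis by (simp add: h_def)
  next
    case False
    then have le: "t \<le> t0" by simp
    have "h t0 \<le> h t"
    proof (rule DERIV_nonpos_imp_decreasing_open[OF le _ cont])
      fix x assume "t < x" "x < t0"
      then have "exp (m * x - m^2/2) \<le> exp L" using eq[of x] by simp
      then show "\<exists>y. (h has_real_derivative y) (at x) \<and> y \<le> 0"
        using hd normal_density_nonneg by (intro exI conjI) (auto intro!: mult_nonneg_nonpos)
    qed
    then show ?thesis by (simp add: h_def)
  qed
qed

lemma Phi_cont_comp[continuous_intros]: "continuous_on S f \<Longrightarrow> continuous_on S (\<lambda>x. Phi (f x))"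
  by (rule continuous_on_compose2[OF Phi_cont_on[of UNIV]]) auto

lemma lin_top: assumes "m > (0::real)" shows "filterlim (\<lambda>L. L / m + c) at_top at_top"
  unfolding filterlim_at_top eventually_at_top_linorder
proof
  fix Z show "\<exists>N. \<forall>n\<ge>N. Z \<le> n / m + c"
    using assms by (intro exI[of _ "(Z - c) * m"]) (auto simp: field_simps)
qed

lemma lin_bot: assumes "m > (0::real)" shows "filterlim (\<lambda>L. L / m + c) at_bot at_bot"
  unfolding filterlim_at_bot eventually_at_bot_linorder
proof
  fix Z show "\<exists>N. \<forall>n\<le>N. n / m + c \<le> Z"
    using assms by (intro exI[of _ "(Z - c) * m"]) (auto simp: field_simps)
qed

lemma comp_bound:
  assumes m: "m > 0" and a: "0 \<le> a" "a \<le> 1"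
  shows "G m a \<ge> Phi (L / m - m / 2) - exp L * (a - (1 - Phi (L / m + m / 2)))"
proof -
  define t0 where "t0 = L / m + m / 2"
  have t0m: "t0 - m = L / m - m / 2" by (simp add: t0_def)
  define h where "h = (\<lambda>t. Phi (t - m) - exp L * Phi t)"
  have hk: "h t \<ge> h t0" for t unfolding h_def by (rule key[OF m t0_def])
  have ft: "filterlim (\<lambda>t. t - m) at_top at_top"
    using lin_top[of 1 "-m"] by simp
  have fb: "filterlim (\<lambda>t. t - m) at_bot at_bot"
    using lin_bot[of 1 "-m"] by simp
  consider "a = 0" | "a = 1" | "0 < a \<and> a < 1" using a by linarith
  then show ?thesis
  proof cases
    case 1
    have "(h \<longlongrightarrow> 1 - exp L * 1) at_top"
      unfolding h_def by (intro tendsto_intros filterlim_compose[OF Phi_top ft] Phi_top)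
    then have "h t0 \<le> 1 - exp L"
      by (intro tendsto_lowerbound[of h _ at_top]) (auto intro: always_eventually hk)
    then show ?thesis using 1 by (simp add: G_def t0m[symmetric] h_def t0_def[symmetric] algebra_simps)
  next
    case 2
    have "(h \<longlongrightarrow> 0 - exp L * 0) at_bot"
      unfolding h_def by (intro tendsto_intros filterlim_compose[OF Phi_bot fb] Phi_bot)
    then have "h t0 \<le> 0"
      by (intro tendsto_lowerbound[of h _ at_bot]) (auto intro: always_eventually hk)
    then show ?thesis using 2 by (simp add: G_def t0m[symmetric] h_def t0_def[symmetric] algebra_simps)
  next
    case 3
    then obtain t where t: "Phi t = 1 - a" using Phi_surj[of "1 - a"] by auto
    have "G m a = Phi (t - m)" using G_eq[OF _ _ t] 3 by auto
    then show ?thesis using hk[of t] t by (simp add: t0m[symmetric] h_def t0_def[symmetric] algebra_simps)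
  qed
qed

theorem lemma5:
  fixes I :: "'i set" and q mu :: "'i \<Rightarrow> real" and alpha :: real
  assumes "finite I"
    and "\<And>i. i \<in> I \<Longrightarrow> q i \<ge> 0"
    and "(\<Sum>i\<in>I. q i) = 1"
    and "\<And>i. i \<in> I \<Longrightarrow> mu i > 0"
    and "0 < alpha" and "alpha < 1"
  shows "(\<exists>!L. 1 - alpha = (\<Sum>i\<in>I. q i * Phi (L / mu i + mu i / 2)))
       \<and> (\<forall>L. 1 - alpha = (\<Sum>i\<in>I. q i * Phi (L / mu i + mu i / 2)) \<longrightarrow>
            Inf {\<Sum>i\<in>I. q i * G (mu i) (a i) | a.
                   (\<forall>i\<in>I. 0 \<le> a i \<and> a i \<le> 1) \<and> (\<Sum>i\<in>I. q i * a i) = alpha}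
            = (\<Sum>i\<in>I. q i * Phi (L / mu i - mu i / 2)))"
proof
  note fin = assms(1) and qnn = assms(2) and qs = assms(3) and mup = assms(4)
  define S where "S = (\<lambda>L. \<Sum>i\<in>I. q i * Phi (L / mu i + mu i / 2))"
  obtain j where j: "j \<in> I" "q j > 0"
  proof -
    have "\<exists>j\<in>I. q j \<noteq> 0" using qs by (metis sum.neutral zero_neq_one)
    then show ?thesis using that qnn by force
  qed
  have Smono: "S x < S y" if "x < y" for x y
    unfolding S_def
  proof (rule sum_strict_mono_ex1[OF fin])
    have lt: "Phi (x / mu i + mu i / 2) < Phi (y / mu i + mu i / 2)" if "i \<in> I" for i
      using mup[OF that] \<open>x < y\<close> by (intro Phi_less) (simp add: divide_strict_right_mono)
    show "\<forall>i\<in>I. q i * Phi (x / mu i + mu i / 2) \<le> q i * Phi (y / mu i + mu i / 2)"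
      using lt qnn by (meson less_imp_le mult_left_mono)
    show "\<exists>i\<in>I. q i * Phi (x / mu i + mu i / 2) < q i * Phi (y / mu i + mu i / 2)"
      using lt[OF j(1)] j by (intro bexI[of _ j]) auto
  qed
  have Scont: "continuous_on T S" for T
    proof -
    have mun: "\<And>i. i \<in> I \<Longrightarrow> mu i \<noteq> 0" using mup by fastforce
    show ?thesis unfolding S_def using mun by (intro continuous_intros) auto
  qed
  have Stop: "(S \<longlongrightarrow> (\<Sum>i\<in>I. q i * 1)) at_top"
    unfolding S_def
    by (intro tendsto_sum tendsto_mult_left filterlim_compose[OF Phi_top] lin_top mup)
  have Sbot: "(S \<longlongrightarrow> (\<Sum>i\<in>I. q i * 0)) at_bot"
    unfolding S_def
    by (intro tendsto_sum tendsto_mult_left filterlim_compose[OF Phi_bot] lin_bot mup)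
  have ex: "\<exists>L. S L = 1 - alpha"
  proof -
    have "eventually (\<lambda>x. S x > 1 - alpha) at_top"
      using order_tendstoD(1)[OF Stop] qs assms(5) by simp
    then obtain b where b: "\<And>x. x \<ge> b \<Longrightarrow> S x > 1 - alpha" by (auto simp: eventually_at_top_linorder)
    have "eventually (\<lambda>x. S x < 1 - alpha) at_bot"
      using order_tendstoD(2)[OF Sbot] assms(6) by simp
    then obtain a where a: "\<And>x. x \<le> a \<Longrightarrow> S x < 1 - alpha" by (auto simp: eventually_at_bot_linorder)
    have "S (min a b) \<le> 1 - alpha" "1 - alpha \<le> S b" using a[of "min a b"] b[of b] by auto
    from IVT'[OF this _ Scont] show ?thesis by auto
  qed
  show "\<exists>!L. 1 - alpha = (\<Sum>i\<in>I. q i * Phi (L / mu i + mu i / 2))"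
  proof -
    have ex': "\<exists>L. 1 - alpha = S L" using ex by metis
    have "\<exists>!L. 1 - alpha = S L"
    proof (rule ex_ex1I[OF ex'])
      fix x y assume "1 - alpha = S x" "1 - alpha = S y"
      then show "x = y" using Smono[of x y] Smono[of y x] by (cases x y rule: linorder_cases) auto
    qed
    then show ?thesis unfolding S_def .
  qed
  show "\<forall>L. 1 - alpha = (\<Sum>i\<in>I. q i * Phi (L / mu i + mu i / 2)) \<longrightarrow>
            Inf {\<Sum>i\<in>I. q i * G (mu i) (a i) | a.
                   (\<forall>i\<in>I. 0 \<le> a i \<and> a i \<le> 1) \<and> (\<Sum>i\<in>I. q i * a i) = alpha}
            = (\<Sum>i\<in>I. q i * Phi (L / mu i - mu i / 2))"
  proof (intro allI impI)
    fix L assume L: "1 - alpha = (\<Sum>i\<in>I. q i * Phi (L / mu i + mu i / 2))"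
    define as where "as = (\<lambda>i. 1 - Phi (L / mu i + mu i / 2))"
    define V where "V = (\<Sum>i\<in>I. q i * Phi (L / mu i - mu i / 2))"
    have as01: "0 < as i" "as i < 1" for i
      unfolding as_def using Phi_lt1 Phi_gt0 by (auto simp: less_diff_eq)
    have ass: "(\<Sum>i\<in>I. q i * as i) = alpha"
      unfolding as_def by (simp add: right_diff_distrib sum_subtractf qs L[symmetric])
    have Gas: "G (mu i) (as i) = Phi (L / mu i - mu i / 2)" for i
      using G_eq[OF as01[of i] _, of "L / mu i + mu i / 2" "mu i"] by (simp add: as_def)
    show "Inf {\<Sum>i\<in>I. q i * G (mu i) (a i) | a.
                   (\<forall>i\<in>I. 0 \<le> a i \<and> a i \<le> 1) \<and> (\<Sum>i\<in>I. q i * a i) = alpha} = V"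
    proof (rule cInf_eq_minimum)
      show "V \<in> {\<Sum>i\<in>I. q i * G (mu i) (a i) | a.
                   (\<forall>i\<in>I. 0 \<le> a i \<and> a i \<le> 1) \<and> (\<Sum>i\<in>I. q i * a i) = alpha}"
        using as01 ass by (intro CollectI exI[of _ as]) (auto simp: V_def Gas less_imp_le)
    next
      fix x assume "x \<in> {\<Sum>i\<in>I. q i * G (mu i) (a i) | a.
                   (\<forall>i\<in>I. 0 \<le> a i \<and> a i \<le> 1) \<and> (\<Sum>i\<in>I. q i * a i) = alpha}"
      then obtain a where a: "\<forall>i\<in>I. 0 \<le> a i \<and> a i \<le> 1" "(\<Sum>i\<in>I. q i * a i) = alpha"
        and x: "x = (\<Sum>i\<in>I. q i * G (mu i) (a i))" by blast
      have "(\<Sum>i\<in>I. q i * (Phi (L / mu i - mu i / 2) - exp L * (a i - as i)))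
            \<le> (\<Sum>i\<in>I. q i * G (mu i) (a i))"
        using a(1) qnn mup by (intro sum_mono mult_left_mono) (auto simp: as_def intro!: comp_bound)
      moreover have "(\<Sum>i\<in>I. q i * (Phi (L / mu i - mu i / 2) - exp L * (a i - as i)))
            = V - exp L * ((\<Sum>i\<in>I. q i * a i) - (\<Sum>i\<in>I. q i * as i))"
        by (simp add: V_def algebra_simps sum_subtractf sum.distrib sum_distrib_left)
      ultimately show "V \<le> x" using x a(2) ass by simp
    qed
  qed
qed

end
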